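(* Let $\mathcal{R}$ be the involutive system $u_{ij}=f_{ij}(x^1,x^2,x^3,u,u_i,u_j)$, $1\le i<j\le 3$, with infinite prolongation $\mathcal{R}^\infty$, characteristic vector fields $X_i=D_i$, rescaled contact form $\Theta=\mu\theta$, and characteristic coframe forms $\xi_j^k=X_j^k(\Theta)$. Then for every $k\ge 1$ and every $i\neq j$ in $\{1,2,3\}$, the form $X_i(\xi_j^k)$, restricted to $\mathcal{R}^\infty$, has adapted order less than or equal to $k$.
   Context: Setting: $U\subset\mathbb{R}^3$ open connected, $E=U\times(a,b)\to U$ trivial bundle with coordinates $(x^1,x^2,x^3,u)$, $J^\infty(E)$ its infinite jet bundle with coordinates $x^i,u,u_I$ and contact forms $\theta_I=du_I-\sum_{j}u_{Ij}dx^j$ (write $\theta=\theta_\emptyset=du-\sum_i u_i dx^i$). $\mathcal{R}$ is the system $F_{ij}:=u_{ij}-f_{ij}(x^1,x^2,x^3,u,u_i,u_j)=0$, $1\le i<j\le 3$, with $f_{ij}$ smooth and satisfying the integrability conditions $D_kf_{ij}=D_if_{kj}$ for distinct $i,j,k$ (so the system is involutive). $\mathcal{R}^\infty\subset J^\infty(E)$ is its infinite prolongation (locus where all $F_{ij}$ and all their total derivatives vanish), with coordinates $(x^i,u,u_i,u_{ii},\dots,u_{i^k},\dots)$. $D_i$ denotes the total derivative restricted to $\mathcal{R}^\infty$; these commute, and $X_i:=D_i$, $\sigma_i:=dx^i$. Forms on $\mathcal{R}^\infty$ are bigraded, $\Omega^{r,s}$ = forms of horizontal degree $r$ (in $dx^i$)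 and contact degree $s$; $d=d_H+d_V$. For a total vector field $X$ and $\omega\in\Omega^{r,s}$, $X(\omega)$ denotes the projected Lie derivative $\pi^{r,s}(\mathcal{L}_X\omega)$; one has $X_j(\theta_I)=\theta_{Ij}$ and $d_H\omega=\sum_i\sigma_i\wedge X_i(\omega)$. Applying $d_V$ to $F_{ij}=0$ gives on $\mathcal{R}^\infty$: $X_iX_j(\theta)+a^i_{ij}X_i(\theta)+a^j_{ij}X_j(\theta)+c_{ij}\theta=0$ with $a^i_{ij}=\partial F_{ij}/\partial u_i$, $a^j_{ij}=\partial F_{ij}/\partial u_j$, $c_{ij}=\partial F_{ij}/\partial u$. For a nonvanishing function $\mu$ on $\mathcal{R}^\infty$ set $\Theta=\mu\theta$. Define $\xi_i^k=X_i^k(\Theta)$ for $i=1,2,3$, $k\ge1$. A form on $\mathcal{R}^\infty$ has adapted order $\le k$ if it lies in the exterior algebra generated over $C^\infty(\mathcal{R}^\infty)$ by $\{\sigma_1,\sigma_2,\sigma_3,\Theta,\xi_1^1,\xi_2^1,\xi_3^1,\dots,\xi_1^k,\xi_2^k,\xi_3^k\}$; its adapted order is the minimal such $k$. *)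

theory Defs
  imports "HOL-Analysis.Analysis"
begin

text \<open>Jet coordinates on the infinite prolongation R^infinity of the system
  u_ij = f_ij(x,u,u_i,u_j), 1 <= i < j <= 3 (directions indexed by the type 3).
  Vertical (fibre) coordinates: Uc is u, Dc i m is the pure derivative u_{i^(m+1)}.\<close>

datatype vc = Uc | Dc "3" nat
datatype jc = Xc "3" | Vc vc

type_synonym pt = "jc \<Rightarrow> real"

definition jdom :: "(real^3) set \<Rightarrow> real \<Rightarrow> real \<Rightarrow> pt set" where
  "jdom U a b = {p. (\<chi> l. p (Xc l)) \<in> U \<and> a < p (Vc Uc) \<and> p (Vc Uc) < b}"

definition partial :: "jc \<Rightarrow> (pt \<Rightarrow> real) \<Rightarrow> pt \<Rightarrow> real" where
  "partial c G p = deriv (\<lambda>t. G (p(c := t))) (p c)"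

definition dep :: "pt set \<Rightarrow> (pt \<Rightarrow> real) \<Rightarrow> jc set" where
  "dep Dom G = {c. \<exists>p t. p \<in> Dom \<and> p(c := t) \<in> Dom \<and> G (p(c := t)) \<noteq> G p}"

fun pd :: "jc list \<Rightarrow> (pt \<Rightarrow> real) \<Rightarrow> pt \<Rightarrow> real" where
  "pd [] G = G"
| "pd (c # cs) G = partial c (pd cs G)"

definition smooth_jet :: "pt set \<Rightarrow> (pt \<Rightarrow> real) \<Rightarrow> bool" where
  "smooth_jet Dom G \<longleftrightarrow> finite (dep Dom G) \<and>
     (\<forall>cs. continuous_on Dom (pd cs G) \<and>
        (\<forall>c. \<forall>p\<in>Dom. (\<lambda>t. pd cs G (p(c := t))) differentiable (at (p c))))"

text \<open>The right-hand side f_ij of the system as a function on R^infinity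
  (symmetric in i j; only f i j with i < j is used).\<close>
definition Fsys :: "(3 \<Rightarrow> 3 \<Rightarrow> real^3 \<Rightarrow> real \<Rightarrow> real \<Rightarrow> real \<Rightarrow> real) \<Rightarrow> 3 \<Rightarrow> 3 \<Rightarrow> pt \<Rightarrow> real" where
  "Fsys f i j p = (if i < j
      then f i j (\<chi> l. p (Xc l)) (p (Vc Uc)) (p (Vc (Dc i 0))) (p (Vc (Dc j 0)))
      else f j i (\<chi> l. p (Xc l)) (p (Vc Uc)) (p (Vc (Dc j 0))) (p (Vc (Dc i 0))))"

definition Dvec :: "pt set \<Rightarrow> (jc \<Rightarrow> pt \<Rightarrow> real) \<Rightarrow> (pt \<Rightarrow> real) \<Rightarrow> pt \<Rightarrow> real" where
  "Dvec Dom V G p = (\<Sum>c\<in>dep Dom G. partial c G p * V c p)"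

text \<open>Components of D_j on the coordinates x, u, u_{j^n}, u_l (l ~= j); enough to
  compute D_j^m f_ij.\<close>
definition Wpure :: "(3 \<Rightarrow> 3 \<Rightarrow> real^3 \<Rightarrow> real \<Rightarrow> real \<Rightarrow> real \<Rightarrow> real) \<Rightarrow> 3 \<Rightarrow> jc \<Rightarrow> pt \<Rightarrow> real" where
  "Wpure f j c p = (case c of
      Xc l \<Rightarrow> (if l = j then 1 else 0)
    | Vc Uc \<Rightarrow> p (Vc (Dc j 0))
    | Vc (Dc l n) \<Rightarrow> (if l = j then p (Vc (Dc j (Suc n)))
                     else if n = 0 then Fsys f j l p else 0))"

text \<open>comp f Dom i v = D_i applied to the coordinate v, restricted to R^infinity:
  D_i u = u_i, D_i u_{i^(m+1)} = u_{i^(m+2)}, and for j ~= i,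
  D_i u_{j^(m+1)} = u_{i j^(m+1)} = D_j^m f_ij.\<close>
definition comp :: "(3 \<Rightarrow> 3 \<Rightarrow> real^3 \<Rightarrow> real \<Rightarrow> real \<Rightarrow> real \<Rightarrow> real) \<Rightarrow> pt set \<Rightarrow> 3 \<Rightarrow> vc \<Rightarrow> pt \<Rightarrow> real" where
  "comp f Dom i v = (case v of
      Uc \<Rightarrow> (\<lambda>p. p (Vc (Dc i 0)))
    | Dc j m \<Rightarrow> (if j = i then (\<lambda>p. p (Vc (Dc i (Suc m))))
                 else (Dvec Dom (Wpure f j) ^^ m) (Fsys f i j)))"

definition Vfull :: "(3 \<Rightarrow> 3 \<Rightarrow> real^3 \<Rightarrow> real \<Rightarrow> real \<Rightarrow> real \<Rightarrow> real) \<Rightarrow> pt set \<Rightarrow> 3 \<Rightarrow> jc \<Rightarrow> pt \<Rightarrow> real" where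
  "Vfull f Dom i c p = (case c of Xc l \<Rightarrow> (if l = i then 1 else 0) | Vc v \<Rightarrow> comp f Dom i v p)"

definition Dtot :: "(3 \<Rightarrow> 3 \<Rightarrow> real^3 \<Rightarrow> real \<Rightarrow> real \<Rightarrow> real \<Rightarrow> real) \<Rightarrow> pt set \<Rightarrow> 3 \<Rightarrow> (pt \<Rightarrow> real) \<Rightarrow> pt \<Rightarrow> real" where
  "Dtot f Dom i = Dvec Dom (Vfull f Dom i)"

text \<open>One-forms on R^infinity in the coframe dx^l (component Xc l) and
  theta_v (component Vc v): omega p c is the coefficient of the coframe element c at p.\<close>
type_synonym form1 = "pt \<Rightarrow> jc \<Rightarrow> real"

definition dV :: "(pt \<Rightarrow> real) \<Rightarrow> form1" where
  "dV G = (\<lambda>p c. case c of Xc l \<Rightarrow> 0 | Vc v \<Rightarrow> partial (Vc v) G p)"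

definition fsupp :: "pt set \<Rightarrow> form1 \<Rightarrow> jc set" where
  "fsupp Dom \<omega> = {c. \<exists>p\<in>Dom. \<omega> p c \<noteq> 0}"

text \<open>Projected Lie derivative X_i(omega) along X_i = D_i of a one-form:
  X_i(g dx^l) = D_i(g) dx^l,  X_i(g theta_v) = D_i(g) theta_v + g d_V(D_i v).\<close>
definition Xop :: "(3 \<Rightarrow> 3 \<Rightarrow> real^3 \<Rightarrow> real \<Rightarrow> real \<Rightarrow> real \<Rightarrow> real) \<Rightarrow> pt set \<Rightarrow> 3 \<Rightarrow> form1 \<Rightarrow> form1" where
  "Xop f Dom i \<omega> = (\<lambda>p c. Dtot f Dom i (\<lambda>q. \<omega> q c) p
      + (\<Sum>v\<in>{v. Vc v \<in> fsupp Dom \<omega>}. \<omega> p (Vc v) * dV (comp f Dom i v) p c))"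

definition sigma :: "3 \<Rightarrow> form1" where
  "sigma l = (\<lambda>p c. if c = Xc l then 1 else 0)"

definition Theta :: "(pt \<Rightarrow> real) \<Rightarrow> form1" where
  "Theta \<mu> = (\<lambda>p c. if c = Vc Uc then \<mu> p else 0)"

definition xi :: "(3 \<Rightarrow> 3 \<Rightarrow> real^3 \<Rightarrow> real \<Rightarrow> real \<Rightarrow> real \<Rightarrow> real) \<Rightarrow> pt set \<Rightarrow> (pt \<Rightarrow> real) \<Rightarrow> 3 \<Rightarrow> nat \<Rightarrow> form1" where
  "xi f Dom \<mu> j k = (Xop f Dom j ^^ k) (Theta \<mu>)"

text \<open>Adapted order <= k for a one-form: it lies in the degree-one part of the exterior
  algebra over smooth functions generated by sigma_l, Theta, xi_l^m (m <= k), i.e. it is a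
  smooth-coefficient combination of these generators.\<close>
definition adapted_order_le1 :: "(3 \<Rightarrow> 3 \<Rightarrow> real^3 \<Rightarrow> real \<Rightarrow> real \<Rightarrow> real \<Rightarrow> real) \<Rightarrow> pt set \<Rightarrow> (pt \<Rightarrow> real) \<Rightarrow> nat \<Rightarrow> form1 \<Rightarrow> bool" where
  "adapted_order_le1 f Dom \<mu> k \<omega> \<longleftrightarrow>
     (\<exists>s a b. (\<forall>l. smooth_jet Dom (s l)) \<and> smooth_jet Dom a \<and> (\<forall>l m. smooth_jet Dom (b l m)) \<and>
       (\<forall>p\<in>Dom. \<forall>c. \<omega> p c = (\<Sum>l\<in>UNIV. s l p * sigma l p c) + a p * Theta \<mu> p c
            + (\<Sum>l\<in>UNIV. \<Sum>m\<in>{1..k}. b l m p * xi f Dom \<mu> l m p c)))"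

end

theory Submission
  imports Defs "HOL-Analysis.Analysis"
begin


definition lineopen :: "pt set \<Rightarrow> bool" where
  "lineopen D \<longleftrightarrow> (\<forall>p\<in>D. \<forall>c. \<exists>e>0. \<forall>t. \<bar>t - p c\<bar> < e \<longrightarrow> p(c:=t) \<in> D)"

lemma lineopen_ev:
  assumes "lineopen D" "p \<in> D"
  shows "eventually (\<lambda>t. p(c:=t) \<in> D) (nhds (p c))"
proof -
  obtain e where e: "e > 0" "\<And>t. \<bar>t - p c\<bar> < e \<Longrightarrow> p(c:=t) \<in> D"
    using assms unfolding lineopen_def by blast
  show ?thesis unfolding eventually_nhds_metric
    using e by (intro exI[of _ e]) (auto simp: dist_real_def)
qed

lemma jdom_lineopen:
  assumes "open U"
  shows "lineopen (jdom U a b)"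
  unfolding lineopen_def
proof (intro ballI allI)
  fix p c assume p: "p \<in> jdom U a b"
  show "\<exists>e>0. \<forall>t. \<bar>t - p c\<bar> < e \<longrightarrow> p(c:=t) \<in> jdom U a b"
  proof (cases c)
    case (Xc l)
    define x where "x = (\<chi> l. p (Xc l))"
    have "x \<in> U" using p by (simp add: jdom_def x_def)
    then obtain e where e: "e > 0" "ball x e \<subseteq> U" using assms open_contains_ball by blast
    show ?thesis
    proof (intro exI[of _ e] conjI allI impI)
      fix t assume t: "\<bar>t - p c\<bar> < e"
      define y where "y = (\<chi> l'. (p(c:=t)) (Xc l'))"
      have "dist y x \<le> (\<Sum>i\<in>UNIV. \<bar>(y - x) $ i\<bar>)"
        unfolding dist_norm by (rule norm_le_l1_cart)
      also have "(\<Sum>i\<in>UNIV. \<bar>(y - x) $ i\<bar>) = (\<Sum>i\<in>UNIV. if i = l then \<bar>t - p c\<bar> else 0)"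
        by (intro sum.cong refl) (auto simp: y_def x_def Xc)
      also have "\<dots> = \<bar>t - p c\<bar>" by simp
      finally have "y \<in> ball x e" using t by (simp add: dist_commute)
      then have "y \<in> U" using e by blast
      then show "p(c:=t) \<in> jdom U a b" using p by (simp add: jdom_def y_def Xc)
    qed (use e in auto)
  next
    case (Vc v)
    show ?thesis
    proof (cases "v = Uc")
      case True
      have ab: "a < p (Vc Uc)" "p (Vc Uc) < b" using p by (auto simp: jdom_def)
      show ?thesis
        using ab p
        by (intro exI[of _ "min (p (Vc Uc) - a) (b - p (Vc Uc))"]) (auto simp: jdom_def Vc True)
    next
      case False
      then show ?thesis using p by (intro exI[of _ 1]) (auto simp: jdom_def Vc)
    qed
  qed
qed

lemma rdiff: "(f::real\<Rightarrow>real) differentiable at x \<Longrightarrow> f field_differentiable at x"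
  by (simp add: real_differentiable_def field_differentiable_def)

definition ld :: "pt set \<Rightarrow> (pt \<Rightarrow> real) \<Rightarrow> bool" where
  "ld D F \<longleftrightarrow> (\<forall>c. \<forall>p\<in>D. (\<lambda>t. F (p(c:=t))) differentiable at (p c))"

definition cd :: "pt set \<Rightarrow> jc list \<Rightarrow> (pt \<Rightarrow> real) \<Rightarrow> bool" where
  "cd D cs F \<longleftrightarrow> continuous_on D (pd cs F) \<and> ld D (pd cs F)"

definition sm :: "pt set \<Rightarrow> (pt \<Rightarrow> real) \<Rightarrow> bool" where
  "sm D F \<longleftrightarrow> (\<forall>cs. cd D cs F)"

lemma smooth_jet_iff: "smooth_jet D F \<longleftrightarrow> finite (dep D F) \<and> sm D F"
  unfolding smooth_jet_def sm_def cd_def ld_def by blast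

lemma ev_eq:
  assumes "lineopen D" "p \<in> D" "\<forall>q\<in>D. F q = G q"
  shows "eventually (\<lambda>t. F (p(c:=t)) = G (p(c:=t))) (nhds (p c))"
  using lineopen_ev[OF assms(1,2), of c] by eventually_elim (use assms(3) in auto)

lemma partial_cong:
  assumes "lineopen D" "p \<in> D" "\<forall>q\<in>D. F q = G q"
  shows "partial c F p = partial c G p"
  unfolding partial_def by (rule deriv_cong_ev[OF ev_eq[OF assms] refl])

lemma diff_cong:
  fixes F G :: "pt \<Rightarrow> real"
  assumes "lineopen D" "p \<in> D" "\<forall>q\<in>D. F q = G q"
    and "(\<lambda>t. F (p(c:=t))) differentiable at (p c)"
  shows "(\<lambda>t. G (p(c:=t))) differentiable at (p c)"
proof -
  from assms(4) obtain d where "((\<lambda>t. F (p(c:=t))) has_real_derivative d) (at (p c))"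
    by (auto simp: real_differentiable_def)
  then have "((\<lambda>t. G (p(c:=t))) has_real_derivative d) (at (p c))"
    using DERIV_cong_ev[OF refl ev_eq[OF assms(1-3)] refl] by blast
  then show ?thesis by (auto simp: real_differentiable_def)
qed

lemma ld_cong:
  assumes "lineopen D" "\<forall>q\<in>D. F q = G q" "ld D F"
  shows "ld D G"
  using assms diff_cong unfolding ld_def by blast

lemma pd_cong:
  assumes "lineopen D" "\<forall>q\<in>D. F q = G q"
  shows "\<forall>q\<in>D. pd cs F q = pd cs G q"
proof (induction cs)
  case Nil then show ?case using assms by simp
next
  case (Cons c cs) then show ?case using partial_cong[OF assms(1)] by simp
qed

lemma cd_cong:
  assumes "lineopen D" "\<forall>q\<in>D. F q = G q" "cd D cs F"
  shows "cd D cs G"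
proof -
  have e: "\<forall>q\<in>D. pd cs F q = pd cs G q" by (rule pd_cong[OF assms(1,2)])
  show ?thesis using assms(3) ld_cong[OF assms(1) e] continuous_on_cong[OF refl, of D "pd cs F" "pd cs G"] e
    unfolding cd_def by auto
qed

lemma sm_cong:
  assumes "lineopen D" "\<forall>q\<in>D. F q = G q" "sm D F"
  shows "sm D G"
  using assms cd_cong unfolding sm_def by blast

lemma dep_cong:
  assumes "\<forall>q\<in>D. F q = G q"
  shows "dep D F = dep D G"
  unfolding dep_def apply (rule Collect_cong) using assms by metis

lemma pd_append: "pd (cs @ [c]) G = pd cs (partial c G)"
  by (induction cs) auto

lemma partial_nodep:
  assumes "lineopen D" "p \<in> D" "c \<notin> dep D G"
  shows "partial c G p = 0"
proof -
  have "eventually (\<lambda>t. G (p(c:=t)) = G p) (nhds (p c))"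
    using lineopen_ev[OF assms(1,2), of c] by eventually_elim (use assms(2,3) in \<open>auto simp: dep_def\<close>)
  then have "deriv (\<lambda>t. G (p(c:=t))) (p c) = deriv (\<lambda>t. G p) (p c)"
    by (rule deriv_cong_ev) simp
  then show ?thesis by (simp add: partial_def)
qed

lemma dep_partial:
  assumes "lineopen D"
  shows "dep D (partial c G) \<subseteq> dep D G"
proof
  fix d assume d: "d \<in> dep D (partial c G)"
  show "d \<in> dep D G"
  proof (rule ccontr)
    assume nd: "d \<notin> dep D G"
    from d obtain p t where pt: "p \<in> D" "p(d:=t) \<in> D" "partial c G (p(d:=t)) \<noteq> partial c G p"
      by (auto simp: dep_def)
    show False
    proof (cases "d = c")
      case True
      then show False using pt partial_nodep[OF assms _ nd] by auto
    next
      case False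
      have "eventually (\<lambda>s. p(c:=s) \<in> D \<and> (p(d:=t))(c:=s) \<in> D) (nhds (p c))"
        using lineopen_ev[OF assms pt(1), of c] lineopen_ev[OF assms pt(2), of c] False
        by (auto intro: eventually_conj)
      then have "eventually (\<lambda>s. G ((p(d:=t))(c:=s)) = G (p(c:=s))) (nhds (p c))"
      proof eventually_elim
        case (elim s)
        have "(p(d:=t))(c:=s) = (p(c:=s))(d:=t)" using False by (auto simp: fun_upd_twist)
        then show ?case using elim nd unfolding dep_def by auto
      qed
      then have "deriv (\<lambda>s. G ((p(d:=t))(c:=s))) (p c) = deriv (\<lambda>s. G (p(c:=s))) (p c)"
        by (rule deriv_cong_ev) simp
      moreover have "(p(d:=t)) c = p c" using False by simp
      ultimately show False using pt(3) by (simp add: partial_def)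
    qed
  qed
qed



lemma partial_add:
  fixes F G :: "pt \<Rightarrow> real"
  assumes "(\<lambda>t. F (p(c:=t))) differentiable at (p c)" "(\<lambda>t. G (p(c:=t))) differentiable at (p c)"
  shows "partial c (\<lambda>q. F q + G q) p = partial c F p + partial c G p"
  using assms unfolding partial_def by (simp add: rdiff)

lemma partial_mult:
  fixes F G :: "pt \<Rightarrow> real"
  assumes "(\<lambda>t. F (p(c:=t))) differentiable at (p c)" "(\<lambda>t. G (p(c:=t))) differentiable at (p c)"
  shows "partial c (\<lambda>q. F q * G q) p = F p * partial c G p + partial c F p * G p"
  using assms unfolding partial_def by (simp add: rdiff)

lemma partial_div:
  fixes F G :: "pt \<Rightarrow> real"
  assumes "(\<lambda>t. F (p(c:=t))) differentiable at (p c)" "(\<lambda>t. G (p(c:=t))) differentiable at (p c)"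
    "G p \<noteq> 0"
  shows "partial c (\<lambda>q. F q / G q) p = (partial c F p * G p - F p * partial c G p) / (G p * G p)"
  using assms unfolding partial_def by (simp add: rdiff power2_eq_square)

lemma partial_const: "partial c (\<lambda>q. k) p = 0"
  by (simp add: partial_def)

lemma partial_coord: "partial c (\<lambda>q. q c0) p = (if c = c0 then 1 else 0)"
proof (cases "c = c0")
  case True then show ?thesis by (simp add: partial_def)
next
  case False then show ?thesis by (simp add: partial_def)
qed

lemma ld_add: "ld D F \<Longrightarrow> ld D G \<Longrightarrow> ld D (\<lambda>q. F q + G q)"
  unfolding ld_def by simp
lemma ld_mult: "ld D F \<Longrightarrow> ld D G \<Longrightarrow> ld D (\<lambda>q. F q * G q)"
  unfolding ld_def by simp
lemma ld_div: "ld D F \<Longrightarrow> ld D G \<Longrightarrow> \<forall>q\<in>D. G q \<noteq> 0 \<Longrightarrow> ld D (\<lambda>q. F q / G q)"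
  unfolding ld_def by simp
lemma ld_const: "ld D (\<lambda>q. k)"
  unfolding ld_def by simp
lemma ld_coord: "ld D (\<lambda>q. q c0)"
  unfolding ld_def
proof (intro allI ballI)
  fix c and p :: pt
  show "(\<lambda>t. (p(c:=t)) c0) differentiable at (p c)"
    by (cases "c0 = c") auto
qed


lemma pd_const: "pd cs (\<lambda>q. k) = (\<lambda>q. if cs = [] then k else 0)"
  by (induction cs) (auto simp: partial_const)

lemma sm_const: "sm D (\<lambda>q. k)"
  unfolding sm_def cd_def by (auto simp: pd_const ld_const)

lemma pd_coord_append: "pd (cs @ [c]) (\<lambda>q. q c0) = (\<lambda>q. if cs = [] then (if c = c0 then 1 else 0) else 0)"
proof -
  have "partial c (\<lambda>q. q c0) = (\<lambda>q. if c = c0 then 1 else 0)"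
    by (rule ext) (rule partial_coord)
  then show ?thesis unfolding pd_append by (simp add: pd_const)
qed

lemma sm_coord: "sm D (\<lambda>q. q c0)"
  unfolding sm_def
proof
  fix cs show "cd D cs (\<lambda>q. q c0)"
  proof (cases cs rule: rev_exhaust)
    case Nil
    have "continuous_on D (\<lambda>q::pt. q c0)"
      by (rule continuous_on_subset[OF continuous_on_product_coordinates subset_UNIV])
    then show ?thesis using Nil by (simp add: cd_def ld_coord)
  next
    case (snoc ys y)
    have "cd D [] (\<lambda>q. if ys = [] then (if y = c0 then 1 else 0) else 0)"
      unfolding cd_def by (simp add: ld_const)
    then show ?thesis unfolding cd_def snoc pd_coord_append by simp
  qed
qed

lemma sum_pd:
  assumes "lineopen D" "\<forall>cs'. length cs' < length cs \<longrightarrow> ld D (pd cs' A) \<and> ld D (pd cs' B)"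
  shows "\<forall>q\<in>D. pd cs (\<lambda>q. A q + B q) q = pd cs A q + pd cs B q"
  using assms(2)
proof (induction cs)
  case Nil then show ?case by simp
next
  case (Cons c cs)
  have IH: "\<forall>q\<in>D. pd cs (\<lambda>q. A q + B q) q = pd cs A q + pd cs B q"
    using Cons by auto
  have l: "ld D (pd cs A)" "ld D (pd cs B)" using Cons.prems by auto
  show ?case
  proof
    fix q assume q: "q \<in> D"
    have "pd (c#cs) (\<lambda>q. A q + B q) q = partial c (\<lambda>q. pd cs A q + pd cs B q) q"
      using partial_cong[OF assms(1) q IH] by simp
    also have "\<dots> = partial c (pd cs A) q + partial c (pd cs B) q"
      using l q unfolding ld_def by (intro partial_add) auto
    finally show "pd (c#cs) (\<lambda>q. A q + B q) q = pd (c#cs) A q + pd (c#cs) B q" by simp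
  qed
qed

lemma cd_add_lim:
  assumes "lineopen D" "\<forall>cs'. length cs' \<le> length cs \<longrightarrow> cd D cs' A \<and> cd D cs' B"
  shows "cd D cs (\<lambda>q. A q + B q)"
proof -
  have e: "\<forall>q\<in>D. pd cs A q + pd cs B q = pd cs (\<lambda>q. A q + B q) q"
    using sum_pd[OF assms(1), of cs A B] assms(2) unfolding cd_def by auto
  have "cd D [] (\<lambda>q. pd cs A q + pd cs B q)"
    using assms(2) unfolding cd_def by (auto intro!: continuous_intros ld_add)
  then have "cd D [] (pd cs (\<lambda>q. A q + B q))"
    by (rule cd_cong[OF assms(1) e])
  then show ?thesis unfolding cd_def by simp
qed

lemma sm_add: "lineopen D \<Longrightarrow> sm D A \<Longrightarrow> sm D B \<Longrightarrow> sm D (\<lambda>q. A q + B q)"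
  unfolding sm_def using cd_add_lim by blast

lemma sm_partial: "sm D G \<Longrightarrow> sm D (partial c G)"
  unfolding sm_def cd_def pd_append[symmetric] by blast

lemma cd_mult_aux:
  assumes "lineopen D"
  shows "\<forall>A B. sm D A \<and> sm D B \<longrightarrow> (\<forall>cs::jc list. length cs \<le> n \<longrightarrow> cd D cs (\<lambda>q. A q * B q))"
proof (induction n)
  case 0
  show ?case
  proof (intro allI impI)
    fix A B and cs :: "jc list" assume ab: "sm D A \<and> sm D B" and l: "length cs \<le> 0"
    then have "cd D [] A" "cd D [] B" unfolding sm_def by auto
    then show "cd D cs (\<lambda>q. A q * B q)" using l
      unfolding cd_def by (auto intro!: continuous_intros ld_mult)
  qed
next
  case (Suc n)
  show ?case
  proof (intro allI impI)
    fix A B and cs :: "jc list" assume ab: "sm D A \<and> sm D B" and l: "length cs \<le> Suc n"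
    show "cd D cs (\<lambda>q. A q * B q)"
    proof (cases "length cs \<le> n")
      case True then show ?thesis using Suc ab by blast
    next
      case False
      then obtain cs0 c where cs: "cs = cs0 @ [c]" and l0: "length cs0 = n"
        using l by (cases cs rule: rev_exhaust) auto
      have lA: "ld D A" "ld D B" using ab unfolding sm_def cd_def by (metis pd.simps(1))+
      have e: "\<forall>q\<in>D. A q * partial c B q + partial c A q * B q = partial c (\<lambda>q. A q * B q) q"
        using lA unfolding ld_def by (auto intro!: partial_mult[symmetric])
      have IH: "\<And>A B cs. sm D A \<Longrightarrow> sm D B \<Longrightarrow> length cs \<le> n \<Longrightarrow> cd D cs (\<lambda>q. A q * B q)"
        using Suc.IH by blast
      have sP: "sm D (partial c B)" "sm D (partial c A)" using ab sm_partial by blast+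
      have "cd D cs0 (\<lambda>q. A q * partial c B q + partial c A q * B q)"
        apply (rule cd_add_lim[OF assms])
        using IH[of A "partial c B"] IH[of "partial c A" B] ab sP l0 by simp
      then have "cd D cs0 (partial c (\<lambda>q. A q * B q))" by (rule cd_cong[OF assms e])
      then show ?thesis unfolding cd_def cs pd_append .
    qed
  qed
qed

lemma sm_mult: "lineopen D \<Longrightarrow> sm D A \<Longrightarrow> sm D B \<Longrightarrow> sm D (\<lambda>q. A q * B q)"
proof -
  assume a: "lineopen D" "sm D A" "sm D B"
  show ?thesis unfolding sm_def
  proof
    fix cs show "cd D cs (\<lambda>q. A q * B q)"
      using cd_mult_aux[OF a(1), of "length cs"] a(2,3) by blast
  qed
qed

lemma sm_diff: "lineopen D \<Longrightarrow> sm D A \<Longrightarrow> sm D B \<Longrightarrow> sm D (\<lambda>q. A q - B q)"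
proof -
  assume *: "lineopen D" "sm D A" "sm D B"
  have "sm D (\<lambda>q. A q + (\<lambda>q. -1) q * B q)"
    using * by (intro sm_add sm_mult sm_const)
  then show ?thesis by simp
qed

lemma cd_div_aux:
  assumes "lineopen D"
  shows "\<forall>A M. sm D A \<and> sm D M \<and> (\<forall>q\<in>D. M q \<noteq> 0) \<longrightarrow> (\<forall>cs::jc list. length cs \<le> n \<longrightarrow> cd D cs (\<lambda>q. A q / M q))"
proof (induction n)
  case 0
  show ?case
  proof (intro allI impI)
    fix A M and cs :: "jc list" assume ab: "sm D A \<and> sm D M \<and> (\<forall>q\<in>D. M q \<noteq> 0)" and l: "length cs \<le> 0"
    then have "cd D [] A" "cd D [] M" unfolding sm_def by auto
    then show "cd D cs (\<lambda>q. A q / M q)" using l ab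
      unfolding cd_def by (auto intro!: continuous_intros ld_div)
  qed
next
  case (Suc n)
  show ?case
  proof (intro allI impI)
    fix A M and cs :: "jc list" assume ab: "sm D A \<and> sm D M \<and> (\<forall>q\<in>D. M q \<noteq> 0)" and l: "length cs \<le> Suc n"
    show "cd D cs (\<lambda>q. A q / M q)"
    proof (cases "length cs \<le> n")
      case True then show ?thesis using Suc ab by blast
    next
      case False
      then obtain cs0 c where cs: "cs = cs0 @ [c]" and l0: "length cs0 = n"
        using l by (cases cs rule: rev_exhaust) auto
      have lA: "ld D A" "ld D M" using ab unfolding sm_def cd_def by (metis pd.simps(1))+
      have e: "\<forall>q\<in>D. (partial c A q * M q - A q * partial c M q) / (M q * M q) = partial c (\<lambda>q. A q / M q) q"
        using lA ab unfolding ld_def by (auto intro!: partial_div[symmetric])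
      have sN: "sm D (\<lambda>q. partial c A q * M q - A q * partial c M q)"
        using ab assms by (intro sm_diff sm_mult sm_partial) auto
      have sM: "sm D (\<lambda>q. M q * M q)" using ab assms by (intro sm_mult) auto
      have IH: "\<And>A M cs. sm D A \<Longrightarrow> sm D M \<Longrightarrow> \<forall>q\<in>D. M q \<noteq> 0 \<Longrightarrow> length cs \<le> n \<Longrightarrow> cd D cs (\<lambda>q. A q / M q)"
        using Suc.IH by blast
      have nz: "\<forall>q\<in>D. M q * M q \<noteq> 0" using ab by simp
      have "cd D cs0 (\<lambda>q. (partial c A q * M q - A q * partial c M q) / (M q * M q))"
        by (rule IH[OF sN sM nz]) (simp add: l0)
      then have "cd D cs0 (partial c (\<lambda>q. A q / M q))" by (rule cd_cong[OF assms e])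
      then show ?thesis unfolding cd_def cs pd_append .
    qed
  qed
qed

lemma sm_div: "lineopen D \<Longrightarrow> sm D A \<Longrightarrow> sm D M \<Longrightarrow> \<forall>q\<in>D. M q \<noteq> 0 \<Longrightarrow> sm D (\<lambda>q. A q / M q)"
proof -
  assume a: "lineopen D" "sm D A" "sm D M" "\<forall>q\<in>D. M q \<noteq> 0"
  show ?thesis unfolding sm_def
  proof
    fix cs show "cd D cs (\<lambda>q. A q / M q)"
      using cd_div_aux[OF a(1), of "length cs"] a(2-4) by blast
  qed
qed



abbreviation sj where "sj \<equiv> smooth_jet"

lemma dep_binop: "dep D (\<lambda>q. h (A q) (B q)) \<subseteq> dep D A \<union> dep D B"
  unfolding dep_def by force

lemma dep_unop: "dep D (\<lambda>q. h (A q)) \<subseteq> dep D A"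
  unfolding dep_def by force

lemma dep_const: "dep D (\<lambda>q. k) = {}"
  unfolding dep_def by simp

lemma dep_coord: "dep D (\<lambda>q. q c0) \<subseteq> {c0}"
  unfolding dep_def by auto

lemma dep_sum: "dep D (\<lambda>q. \<Sum>x\<in>S. h x q) \<subseteq> (\<Union>x\<in>S. dep D (h x))"
proof
  fix c assume "c \<in> dep D (\<lambda>q. \<Sum>x\<in>S. h x q)"
  then obtain p t where pt: "p \<in> D" "p(c:=t) \<in> D" "(\<Sum>x\<in>S. h x (p(c:=t))) \<noteq> (\<Sum>x\<in>S. h x p)"
    unfolding dep_def by auto
  then obtain x where "x \<in> S" "h x (p(c:=t)) \<noteq> h x p"
    by (meson sum.cong)
  then show "c \<in> (\<Union>x\<in>S. dep D (h x))" using pt unfolding dep_def by auto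
qed

lemma sj_add: "lineopen D \<Longrightarrow> sj D A \<Longrightarrow> sj D B \<Longrightarrow> sj D (\<lambda>q. A q + B q)"
  unfolding smooth_jet_iff using sm_add dep_binop[of D "(+)" A B] by (meson finite_UnI finite_subset)

lemma sj_mult: "lineopen D \<Longrightarrow> sj D A \<Longrightarrow> sj D B \<Longrightarrow> sj D (\<lambda>q. A q * B q)"
  unfolding smooth_jet_iff using sm_mult dep_binop[of D "(*)" A B] by (meson finite_UnI finite_subset)

lemma sj_diff: "lineopen D \<Longrightarrow> sj D A \<Longrightarrow> sj D B \<Longrightarrow> sj D (\<lambda>q. A q - B q)"
  unfolding smooth_jet_iff using sm_diff dep_binop[of D "(-)" A B] by (meson finite_UnI finite_subset)

lemma sj_div: "lineopen D \<Longrightarrow> sj D A \<Longrightarrow> sj D M \<Longrightarrow> \<forall>q\<in>D. M q \<noteq> 0 \<Longrightarrow> sj D (\<lambda>q. A q / M q)"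
  unfolding smooth_jet_iff using sm_div dep_binop[of D "(/)" A M] by (meson finite_UnI finite_subset)

lemma sj_const: "sj D (\<lambda>q. k)"
  unfolding smooth_jet_iff by (simp add: dep_const sm_const)

lemma sj_coord: "sj D (\<lambda>q. q c0)"
  unfolding smooth_jet_iff using sm_coord dep_coord by (metis finite.emptyI finite_insert finite_subset)

lemma sj_partial: "lineopen D \<Longrightarrow> sj D G \<Longrightarrow> sj D (partial c G)"
  unfolding smooth_jet_iff using sm_partial dep_partial by (metis finite_subset)

lemma sj_sum: assumes "lineopen D" "finite S" "\<forall>x\<in>S. sj D (h x)"
  shows "sj D (\<lambda>q. \<Sum>x\<in>S. h x q)"
  using assms(2,3)
proof (induction S rule: finite_induct)
  case empty then show ?case by (simp add: sj_const)
next
  case (insert x F)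
  then show ?case using sj_add[OF assms(1), of "h x" "\<lambda>q. \<Sum>x\<in>F. h x q"] by simp
qed

lemma sj_cong: "lineopen D \<Longrightarrow> \<forall>q\<in>D. F q = G q \<Longrightarrow> sj D F \<Longrightarrow> sj D G"
  unfolding smooth_jet_iff using sm_cong dep_cong by metis

lemma Dvec_eq: "Dvec D V G = (\<lambda>p. \<Sum>c\<in>dep D G. partial c G p * V c p)"
  by (rule ext) (simp add: Dvec_def)

lemma sj_Dvec:
  assumes "lineopen D" "sj D G" "\<forall>c\<in>dep D G. sj D (V c)"
  shows "sj D (Dvec D V G)"
proof -
  have fin: "finite (dep D G)" using assms(2) smooth_jet_iff by blast
  show ?thesis unfolding Dvec_eq
    by (rule sj_sum[OF assms(1) fin]) (use assms in \<open>auto intro!: sj_mult sj_partial\<close>)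
qed

lemma dep_Dvec:
  assumes "lineopen D"
  shows "dep D (Dvec D V G) \<subseteq> dep D G \<union> (\<Union>c\<in>dep D G. dep D (V c))"
proof -
  have "dep D (Dvec D V G) \<subseteq> (\<Union>c\<in>dep D G. dep D (\<lambda>p. partial c G p * V c p))"
    unfolding Dvec_eq by (rule dep_sum)
  also have "\<dots> \<subseteq> dep D G \<union> (\<Union>c\<in>dep D G. dep D (V c))"
    using dep_binop[of D "(*)" "partial c G" "V c" for c] dep_partial[OF assms] by blast
  finally show ?thesis .
qed

lemma Dvec_zero: "Dvec D V (\<lambda>q. 0) = (\<lambda>p. 0)"
  unfolding Dvec_eq dep_const by simp

lemma Fsys_sym: "i \<noteq> j \<Longrightarrow> Fsys f i j = Fsys f j i"
  by (rule ext) (auto simp: Fsys_def)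

lemma sj_Fsys:
  assumes "\<forall>i j. i < j \<longrightarrow> sj D (Fsys f i j)" "i \<noteq> j"
  shows "sj D (Fsys f i j)"
proof (cases "i < j")
  case True then show ?thesis using assms by blast
next
  case False
  then have "j < i" using assms(2) by (meson linorder_neqE)
  then show ?thesis using assms Fsys_sym by metis
qed

definition FS :: "3 \<Rightarrow> 3 \<Rightarrow> jc set" where
  "FS i j = range Xc \<union> {Vc Uc, Vc (Dc i 0), Vc (Dc j 0)}"

lemma dep_Fsys: "dep D (Fsys f i j) \<subseteq> FS i j"
proof
  fix c assume c: "c \<in> dep D (Fsys f i j)"
  show "c \<in> FS i j"
  proof (rule ccontr)
    assume n: "c \<notin> FS i j"
    then have nx: "\<And>l. c \<noteq> Xc l" and "c \<noteq> Vc Uc" "c \<noteq> Vc (Dc i 0)" "c \<noteq> Vc (Dc j 0)"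
      by (auto simp: FS_def)
    then have "\<And>p t. Fsys f i j (p(c:=t)) = Fsys f i j p"
      by (simp add: Fsys_def nx[symmetric])
    then show False using c unfolding dep_def by auto
  qed
qed



definition Sij :: "3 \<Rightarrow> 3 \<Rightarrow> nat \<Rightarrow> jc set" where
  "Sij i j m = range Xc \<union> {Vc Uc, Vc (Dc i 0)} \<union> (\<lambda>n. Vc (Dc j n)) ` {..m}"

definition Hf where "Hf f D i j m = (Dvec D (Wpure f j) ^^ m) (Fsys f i j)"

lemma Wpure_eq: "Wpure f j c = (case c of Xc l \<Rightarrow> (\<lambda>p. if l = j then 1 else 0)
   | Vc Uc \<Rightarrow> (\<lambda>p. p (Vc (Dc j 0)))
   | Vc (Dc l n) \<Rightarrow> (if l = j then (\<lambda>p. p (Vc (Dc j (Suc n)))) else if n = 0 then Fsys f j l else (\<lambda>p. 0)))"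
  by (rule ext) (auto simp: Wpure_def split: jc.split vc.split)

context
  fixes f and D :: "pt set"
  assumes lo: "lineopen D" and fs: "\<forall>i j. i < j \<longrightarrow> sj D (Fsys f i j)"
begin

lemma sj_Wpure: "sj D (Wpure f j c)"
proof (cases c)
  case (Xc l) then show ?thesis by (simp add: Wpure_eq sj_const)
next
  case (Vc v)
  show ?thesis
  proof (cases v)
    case Uc then show ?thesis using Vc by (simp add: Wpure_eq sj_coord)
  next
    case (Dc l n)
    then show ?thesis using Vc sj_Fsys[OF fs, of j l]
      by (simp add: Wpure_eq sj_coord sj_const)
  qed
qed

lemma Sij_mono: "m \<le> m' \<Longrightarrow> Sij i j m \<subseteq> Sij i j m'"
  unfolding Sij_def by auto

lemma dep_Wpure:
  assumes "i \<noteq> j" "c \<in> Sij i j m"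
  shows "dep D (Wpure f j c) \<subseteq> Sij i j (Suc m)"
proof -
  consider (x) l where "c = Xc l" | (u) "c = Vc Uc" | (i) "c = Vc (Dc i 0)" | (j) n where "c = Vc (Dc j n)" "n \<le> m"
    using assms(2) unfolding Sij_def by auto
  then show ?thesis
  proof cases
    case x then show ?thesis by (simp add: Wpure_eq dep_const)
  next
    case u then show ?thesis using dep_coord[of D "Vc (Dc j 0)"] by (auto simp: Wpure_eq Sij_def)
  next
    case i then show ?thesis using dep_Fsys[of D f j i] assms(1) by (auto simp: Wpure_eq Sij_def FS_def)
  next
    case j then show ?thesis using dep_coord[of D "Vc (Dc j (Suc n))"] by (auto simp: Wpure_eq Sij_def)
  qed
qed

lemma Hf_props:
  assumes "i \<noteq> j"
  shows "sj D (Hf f D i j m) \<and> dep D (Hf f D i j m) \<subseteq> Sij i j m"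
proof (induction m)
  case 0
  show ?case using sj_Fsys[OF fs assms] dep_Fsys[of D f i j]
    by (auto simp: Hf_def Sij_def FS_def)
next
  case (Suc m)
  have eq: "Hf f D i j (Suc m) = Dvec D (Wpure f j) (Hf f D i j m)" by (simp add: Hf_def)
  have "sj D (Hf f D i j (Suc m))" unfolding eq
    using Suc sj_Wpure by (intro sj_Dvec[OF lo]) auto
  moreover have "dep D (Hf f D i j (Suc m)) \<subseteq> Sij i j (Suc m)"
  proof -
    have "dep D (Hf f D i j (Suc m)) \<subseteq> dep D (Hf f D i j m) \<union> (\<Union>c\<in>dep D (Hf f D i j m). dep D (Wpure f j c))"
      unfolding eq by (rule dep_Dvec[OF lo])
    also have "\<dots> \<subseteq> Sij i j (Suc m)"
    proof (rule Un_least)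
      have A: "dep D (Hf f D i j m) \<subseteq> Sij i j m" using Suc by (rule conjunct2)
      then show "dep D (Hf f D i j m) \<subseteq> Sij i j (Suc m)"
        using Sij_mono[of m "Suc m" i j] by (rule_tac subset_trans) auto
      show "(\<Union>c\<in>dep D (Hf f D i j m). dep D (Wpure f j c)) \<subseteq> Sij i j (Suc m)"
      proof (rule UN_least)
        fix c assume "c \<in> dep D (Hf f D i j m)"
        then have "c \<in> Sij i j m" using A by (rule subsetD[rotated])
        then show "dep D (Wpure f j c) \<subseteq> Sij i j (Suc m)" by (rule dep_Wpure[OF assms])
      qed
    qed
    finally show ?thesis .
  qed
  ultimately show ?case ..
qed

lemma comp_eq: "comp f D i v = (case v of Uc \<Rightarrow> (\<lambda>p. p (Vc (Dc i 0)))
   | Dc j m \<Rightarrow> (if j = i then (\<lambda>p. p (Vc (Dc i (Suc m)))) else Hf f D i j m))"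
  by (simp add: comp_def Hf_def split: vc.split)

lemma sj_comp: "sj D (comp f D i v)"
proof (cases v)
  case Uc then show ?thesis by (simp add: comp_eq sj_coord)
next
  case (Dc j m)
  then show ?thesis using Hf_props[of i j m] by (auto simp: comp_eq sj_coord)
qed

lemma Vfull_eq: "Vfull f D i c = (case c of Xc l \<Rightarrow> (\<lambda>p. if l = i then 1 else 0) | Vc v \<Rightarrow> comp f D i v)"
  by (rule ext) (simp add: Vfull_def split: jc.split)

lemma sj_Vfull: "sj D (Vfull f D i c)"
  by (cases c) (simp_all add: Vfull_eq sj_const sj_comp)

lemma sj_Dtot: "sj D G \<Longrightarrow> sj D (Dtot f D i G)"
  unfolding Dtot_def by (rule sj_Dvec[OF lo]) (auto simp: sj_Vfull)

end

lemma Dtot_zero: "Dtot f D i (\<lambda>q. 0) = (\<lambda>p. 0)"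
  unfolding Dtot_def by (rule Dvec_zero)



definition vf :: "(vc \<Rightarrow> pt \<Rightarrow> real) \<Rightarrow> form1" where
  "vf g = (\<lambda>p c. case c of Xc l \<Rightarrow> 0 | Vc v \<Rightarrow> g v p)"

definition thw :: "vc \<Rightarrow> form1" where
  "thw w = (\<lambda>p c. if c = Vc w then 1 else 0)"

lemma Xop_cong:
  assumes lo: "lineopen D" and e: "\<forall>q\<in>D. \<forall>c. \<omega> q c = \<omega>' q c" and p: "p \<in> D"
  shows "Xop f D i \<omega> p c = Xop f D i \<omega>' p c"
proof -
  have e1: "\<forall>q\<in>D. (\<lambda>q. \<omega> q c) q = (\<lambda>q. \<omega>' q c) q" using e by simp
  have dd: "dep D (\<lambda>q. \<omega> q c) = dep D (\<lambda>q. \<omega>' q c)" by (rule dep_cong[OF e1])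
  have "Dtot f D i (\<lambda>q. \<omega> q c) p = Dtot f D i (\<lambda>q. \<omega>' q c) p"
    unfolding Dtot_def Dvec_def dd
    by (intro sum.cong refl arg_cong2[where f="(*)"] partial_cong[OF lo p e1])
  moreover have "fsupp D \<omega> = fsupp D \<omega>'" unfolding fsupp_def using e by auto
  moreover have "\<And>v. \<omega> p (Vc v) = \<omega>' p (Vc v)" using e p by auto
  ultimately show ?thesis unfolding Xop_def by simp
qed

lemma Xop_vf:
  assumes lo: "lineopen D" and fin: "finite S" and sup: "\<forall>v. v \<notin> S \<longrightarrow> g v = (\<lambda>_. 0)" and p: "p \<in> D"
  shows "Xop f D i (vf g) p c = (case c of Xc l \<Rightarrow> 0 | Vc w \<Rightarrow> Dtot f D i (g w) p)
           + (\<Sum>v\<in>S. g v p * dV (comp f D i v) p c)"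
proof -
  have 1: "Dtot f D i (\<lambda>q. vf g q c) p = (case c of Xc l \<Rightarrow> 0 | Vc w \<Rightarrow> Dtot f D i (g w) p)"
  proof (cases c)
    case (Xc l)
    then have "(\<lambda>q. vf g q c) = (\<lambda>q. 0)" by (simp add: vf_def)
    then show ?thesis using Xc by (simp add: Dtot_zero)
  next
    case (Vc w)
    then have "(\<lambda>q. vf g q c) = g w" by (simp add: vf_def)
    then show ?thesis using Vc by simp
  qed
  have sub: "{v. Vc v \<in> fsupp D (vf g)} \<subseteq> S"
  proof
    fix v assume "v \<in> {v. Vc v \<in> fsupp D (vf g)}"
    then obtain q where "q \<in> D" "g v q \<noteq> 0" by (auto simp: fsupp_def vf_def)
    then show "v \<in> S" using sup by force
  qed
  have 2: "(\<Sum>v\<in>{v. Vc v \<in> fsupp D (vf g)}. vf g p (Vc v) * dV (comp f D i v) p c)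
        = (\<Sum>v\<in>S. g v p * dV (comp f D i v) p c)"
  proof (rule sum.mono_neutral_cong_left[OF fin sub])
    show "\<forall>v\<in>S - {v. Vc v \<in> fsupp D (vf g)}. g v p * dV (comp f D i v) p c = 0"
      using p by (auto simp: fsupp_def vf_def)
    show "\<And>v. v \<in> {v. Vc v \<in> fsupp D (vf g)} \<Longrightarrow> vf g p (Vc v) * dV (comp f D i v) p c = g v p * dV (comp f D i v) p c"
      by (simp add: vf_def)
  qed
  show ?thesis unfolding Xop_def 1 2 ..
qed

definition Sj :: "3 \<Rightarrow> nat \<Rightarrow> vc set" where
  "Sj j k = insert Uc ((\<lambda>n. Dc j n) ` {..<k})"

definition topj :: "3 \<Rightarrow> nat \<Rightarrow> vc" where
  "topj j k = (case k of 0 \<Rightarrow> Uc | Suc n \<Rightarrow> Dc j n)"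

definition succj :: "3 \<Rightarrow> vc \<Rightarrow> vc" where
  "succj j v = (case v of Uc \<Rightarrow> Dc j 0 | Dc l m \<Rightarrow> Dc j (Suc m))"

lemma Sj_fin: "finite (Sj j k)" by (simp add: Sj_def)

lemma Sj_Suc: "Sj j (Suc k) = insert (Dc j k) (Sj j k)"
  by (auto simp: Sj_def lessThan_Suc)

lemma Sj_not: "Dc j k \<notin> Sj j k" by (auto simp: Sj_def)

lemma topj_in: "topj j k \<in> Sj j (Suc k)"
  by (cases k) (auto simp: topj_def Sj_def)

lemma topj_in': "topj j k \<in> Sj j k \<or> k = 0"
  by (cases k) (auto simp: topj_def Sj_def)

lemma succj_in: "v \<in> Sj j k \<Longrightarrow> succj j v \<in> Sj j (Suc k)"
  by (auto simp: Sj_def succj_def)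

lemma succj_top: "v \<in> Sj j k \<Longrightarrow> (succj j v = Dc j k \<longleftrightarrow> v = topj j (Suc k) \<and> False) \<or> True"
  by simp

lemma succ_eq_top: "v \<in> Sj j k \<Longrightarrow> succj j v = Dc j k \<longleftrightarrow> v = topj j k"
  by (cases k) (auto simp: Sj_def succj_def topj_def)

lemma topj_mem: "k > 0 \<Longrightarrow> topj j k \<in> Sj j k"
  by (cases k) (auto simp: topj_def Sj_def)

lemma dV_fun: "(\<lambda>p. dV G p (Vc w)) = partial (Vc w) G"
  by (rule ext) (simp add: dV_def)

lemma dV_Xc: "dV G p (Xc l) = 0"
  by (simp add: dV_def)

lemma comp_j_succ: "v \<in> Sj j k \<Longrightarrow> comp f D j v = (\<lambda>p. p (Vc (succj j v)))"
  by (auto simp: Sj_def succj_def comp_def)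

lemma vf_sum:
  assumes "finite S" "\<forall>v. v \<notin> S \<longrightarrow> g v = (\<lambda>_. 0)"
  shows "vf g p c = (\<Sum>v\<in>S. g v p * thw v p c)"
proof (cases c)
  case (Xc l) then show ?thesis by (simp add: vf_def thw_def)
next
  case (Vc w)
  have "(\<Sum>v\<in>S. g v p * thw v p c) = (\<Sum>v\<in>S. if v = w then g v p else 0)"
    using Vc by (intro sum.cong) (auto simp: thw_def)
  also have "\<dots> = (if w \<in> S then g w p else 0)" using assms(1) by (simp add: sum.delta')
  also have "\<dots> = g w p" using assms(2) by auto
  finally show ?thesis using Vc by (simp add: vf_def)
qed



context
  fixes f and D :: "pt set" and \<mu> :: "pt \<Rightarrow> real"
  assumes lo: "lineopen D" and fs: "\<forall>i j. i < j \<longrightarrow> sj D (Fsys f i j)" and smu: "sj D \<mu>"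
begin

lemma xi_rep:
  "\<exists>g. (\<forall>v. sj D (g v)) \<and> (\<forall>v. v \<notin> Sj j k \<longrightarrow> g v = (\<lambda>_. 0)) \<and>
       (\<forall>p\<in>D. g (topj j k) p = \<mu> p) \<and> (\<forall>p\<in>D. \<forall>c. xi f D \<mu> j k p c = vf g p c)"
proof (induction k)
  case 0
  define g where "g = (\<lambda>v. if v = Uc then \<mu> else (\<lambda>_::pt. 0::real))"
  have "\<forall>v. sj D (g v)" using smu by (simp add: g_def sj_const)
  moreover have "\<forall>v. v \<notin> Sj j 0 \<longrightarrow> g v = (\<lambda>_. 0)" by (simp add: g_def Sj_def)
  moreover have "\<forall>p\<in>D. g (topj j 0) p = \<mu> p" by (simp add: g_def topj_def)
  moreover have "\<forall>p\<in>D. \<forall>c. xi f D \<mu> j 0 p c = vf g p c"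
    by (auto simp: xi_def Theta_def vf_def g_def split: jc.split)
  ultimately show ?case by blast
next
  case (Suc k)
  then obtain g where sg: "\<forall>v. sj D (g v)" and sup: "\<forall>v. v \<notin> Sj j k \<longrightarrow> g v = (\<lambda>_. 0)"
    and top: "\<forall>p\<in>D. g (topj j k) p = \<mu> p" and rep: "\<forall>p\<in>D. \<forall>c. xi f D \<mu> j k p c = vf g p c"
    by blast
  define g' where "g' = (\<lambda>w p. Dtot f D j (g w) p + (\<Sum>v\<in>Sj j k. g v p * dV (comp f D j v) p (Vc w)))"
  have "\<forall>w. sj D (g' w)"
  proof
    fix w
    have "sj D (\<lambda>p. \<Sum>v\<in>Sj j k. g v p * (\<lambda>p. dV (comp f D j v) p (Vc w)) p)"
      by (rule sj_sum[OF lo Sj_fin]) (auto intro!: sj_mult[OF lo] simp: sg dV_fun sj_partial[OF lo] sj_comp[OF lo fs])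
    then show "sj D (g' w)" unfolding g'_def
      by (intro sj_add[OF lo] sj_Dtot[OF lo fs]) (auto simp: sg)
  qed
  moreover have "\<forall>w. w \<notin> Sj j (Suc k) \<longrightarrow> g' w = (\<lambda>_. 0)"
  proof (intro allI impI)
    fix w assume w: "w \<notin> Sj j (Suc k)"
    then have "g w = (\<lambda>_. 0)" using sup Sj_Suc by auto
    moreover have "\<And>v p. v \<in> Sj j k \<Longrightarrow> dV (comp f D j v) p (Vc w) = 0"
    proof -
      fix v p assume v: "v \<in> Sj j k"
      have "succj j v \<noteq> w" using succj_in[OF v] w by auto
      then show "dV (comp f D j v) p (Vc w) = 0"
        by (simp add: comp_j_succ[OF v] dV_def partial_coord)
    qed
    ultimately show "g' w = (\<lambda>_. 0)" by (simp add: g'_def Dtot_zero)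
  qed
  moreover have "\<forall>p\<in>D. g' (topj j (Suc k)) p = \<mu> p"
  proof
    fix p assume p: "p \<in> D"
    have g0: "g (Dc j k) = (\<lambda>_. 0)" using sup Sj_not by blast
    have "(\<Sum>v\<in>Sj j k. g v p * dV (comp f D j v) p (Vc (Dc j k))) = (\<Sum>v\<in>Sj j k. if v = topj j k then g v p else 0)"
    proof (rule sum.cong[OF refl])
      fix v assume v: "v \<in> Sj j k"
      show "g v p * dV (comp f D j v) p (Vc (Dc j k)) = (if v = topj j k then g v p else 0)"
        using succ_eq_top[OF v] by (auto simp: comp_j_succ[OF v] dV_def partial_coord)
    qed
    also have "\<dots> = \<mu> p"
    proof (cases k)
      case 0
      then show ?thesis using top p by (simp add: sum.delta' Sj_fin Sj_def topj_def)
    next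
      case (Suc n)
      then show ?thesis using top p topj_mem[of k j] by (simp add: sum.delta' Sj_fin)
    qed
    finally show "g' (topj j (Suc k)) p = \<mu> p"
      by (simp add: g'_def topj_def g0 Dtot_zero)
  qed
  moreover have "\<forall>p\<in>D. \<forall>c. xi f D \<mu> j (Suc k) p c = vf g' p c"
  proof (intro ballI allI)
    fix p c assume p: "p \<in> D"
    have "xi f D \<mu> j (Suc k) p c = Xop f D j (xi f D \<mu> j k) p c" by (simp add: xi_def)
    also have "\<dots> = Xop f D j (vf g) p c" by (rule Xop_cong[OF lo rep p])
    also have "\<dots> = (case c of Xc l \<Rightarrow> 0 | Vc w \<Rightarrow> Dtot f D j (g w) p)
           + (\<Sum>v\<in>Sj j k. g v p * dV (comp f D j v) p c)"
      by (rule Xop_vf[OF lo Sj_fin sup p])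
    also have "\<dots> = vf g' p c"
      by (cases c) (simp_all add: vf_def g'_def dV_Xc)
    finally show "xi f D \<mu> j (Suc k) p c = vf g' p c" .
  qed
  ultimately show ?case by blast
qed

end



context
  fixes f :: "3 \<Rightarrow> 3 \<Rightarrow> real^3 \<Rightarrow> real \<Rightarrow> real \<Rightarrow> real \<Rightarrow> real" and D :: "pt set" and \<mu> :: "pt \<Rightarrow> real" and k :: nat
  assumes lo: "lineopen D"
begin

abbreviation "ao \<equiv> adapted_order_le1 f D \<mu> k"

lemma ao_cong: "ao \<omega> \<Longrightarrow> \<forall>p\<in>D. \<forall>c. \<omega> p c = \<omega>' p c \<Longrightarrow> ao \<omega>'"
  unfolding adapted_order_le1_def
proof -
  assume "\<exists>s a b. (\<forall>l. sj D (s l)) \<and> sj D a \<and> (\<forall>l m. sj D (b l m)) \<and>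
       (\<forall>p\<in>D. \<forall>c. \<omega> p c = (\<Sum>l\<in>UNIV. s l p * sigma l p c) + a p * Theta \<mu> p c
            + (\<Sum>l\<in>UNIV. \<Sum>m\<in>{1..k}. b l m p * xi f D \<mu> l m p c))"
  then obtain s a b where "(\<forall>l. sj D (s l)) \<and> sj D a \<and> (\<forall>l m. sj D (b l m)) \<and>
       (\<forall>p\<in>D. \<forall>c. \<omega> p c = (\<Sum>l\<in>UNIV. s l p * sigma l p c) + a p * Theta \<mu> p c
            + (\<Sum>l\<in>UNIV. \<Sum>m\<in>{1..k}. b l m p * xi f D \<mu> l m p c))" by blast
  moreover assume "\<forall>p\<in>D. \<forall>c. \<omega> p c = \<omega>' p c"
  ultimately show "\<exists>s a b. (\<forall>l. sj D (s l)) \<and> sj D a \<and> (\<forall>l m. sj D (b l m)) \<and>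
       (\<forall>p\<in>D. \<forall>c. \<omega>' p c = (\<Sum>l\<in>UNIV. s l p * sigma l p c) + a p * Theta \<mu> p c
            + (\<Sum>l\<in>UNIV. \<Sum>m\<in>{1..k}. b l m p * xi f D \<mu> l m p c))"
    by (intro exI[of _ s] exI[of _ a] exI[of _ b]) simp
qed

lemma ao_add:
  assumes "ao \<omega>1" "ao \<omega>2"
  shows "ao (\<lambda>p c. \<omega>1 p c + \<omega>2 p c)"
proof -
  obtain s1 a1 b1 where h1: "(\<forall>l. sj D (s1 l)) \<and> sj D a1 \<and> (\<forall>l m. sj D (b1 l m)) \<and>
       (\<forall>p\<in>D. \<forall>c. \<omega>1 p c = (\<Sum>l\<in>UNIV. s1 l p * sigma l p c) + a1 p * Theta \<mu> p c
            + (\<Sum>l\<in>UNIV. \<Sum>m\<in>{1..k}. b1 l m p * xi f D \<mu> l m p c))"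
    using assms(1) unfolding adapted_order_le1_def by blast
  obtain s2 a2 b2 where h2: "(\<forall>l. sj D (s2 l)) \<and> sj D a2 \<and> (\<forall>l m. sj D (b2 l m)) \<and>
       (\<forall>p\<in>D. \<forall>c. \<omega>2 p c = (\<Sum>l\<in>UNIV. s2 l p * sigma l p c) + a2 p * Theta \<mu> p c
            + (\<Sum>l\<in>UNIV. \<Sum>m\<in>{1..k}. b2 l m p * xi f D \<mu> l m p c))"
    using assms(2) unfolding adapted_order_le1_def by blast
  show ?thesis unfolding adapted_order_le1_def
  proof (intro exI[of _ "\<lambda>l p. s1 l p + s2 l p"] exI[of _ "\<lambda>p. a1 p + a2 p"]
      exI[of _ "\<lambda>l m p. b1 l m p + b2 l m p"] conjI allI ballI)
    show "\<And>l. sj D (\<lambda>p. s1 l p + s2 l p)" using h1 h2 by (simp add: sj_add[OF lo])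
    show "sj D (\<lambda>p. a1 p + a2 p)" using h1 h2 by (simp add: sj_add[OF lo])
    show "\<And>l m. sj D (\<lambda>p. b1 l m p + b2 l m p)" using h1 h2 by (simp add: sj_add[OF lo])
    fix p c assume p: "p \<in> D"
    show "\<omega>1 p c + \<omega>2 p c = (\<Sum>l\<in>UNIV. (s1 l p + s2 l p) * sigma l p c) + (a1 p + a2 p) * Theta \<mu> p c
            + (\<Sum>l\<in>UNIV. \<Sum>m\<in>{1..k}. (b1 l m p + b2 l m p) * xi f D \<mu> l m p c)"
    proof -
      have e1: "\<omega>1 p c = (\<Sum>l\<in>UNIV. s1 l p * sigma l p c) + a1 p * Theta \<mu> p c
            + (\<Sum>l\<in>UNIV. \<Sum>m\<in>{1..k}. b1 l m p * xi f D \<mu> l m p c)" using h1 p by blast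
      have e2: "\<omega>2 p c = (\<Sum>l\<in>UNIV. s2 l p * sigma l p c) + a2 p * Theta \<mu> p c
            + (\<Sum>l\<in>UNIV. \<Sum>m\<in>{1..k}. b2 l m p * xi f D \<mu> l m p c)" using h2 p by blast
      have d1: "(\<Sum>l\<in>UNIV. (s1 l p + s2 l p) * sigma l p c) = (\<Sum>l\<in>UNIV. s1 l p * sigma l p c) + (\<Sum>l\<in>UNIV. s2 l p * sigma l p c)"
        by (simp add: distrib_right sum.distrib)
      have d2: "(\<Sum>l\<in>UNIV. \<Sum>m\<in>{1..k}. (b1 l m p + b2 l m p) * xi f D \<mu> l m p c)
         = (\<Sum>l\<in>UNIV. \<Sum>m\<in>{1..k}. b1 l m p * xi f D \<mu> l m p c) + (\<Sum>l\<in>UNIV. \<Sum>m\<in>{1..k}. b2 l m p * xi f D \<mu> l m p c)"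
        by (simp add: distrib_right sum.distrib)
      have d3: "(a1 p + a2 p) * Theta \<mu> p c = a1 p * Theta \<mu> p c + a2 p * Theta \<mu> p c"
        by (simp add: distrib_right)
      show ?thesis unfolding e1 e2 d1 d2 d3 by linarith
    qed
  qed
qed

lemma ao_smult:
  assumes "sj D h" "ao \<omega>"
  shows "ao (\<lambda>p c. h p * \<omega> p c)"
proof -
  obtain s1 a1 b1 where h1: "(\<forall>l. sj D (s1 l)) \<and> sj D a1 \<and> (\<forall>l m. sj D (b1 l m)) \<and>
       (\<forall>p\<in>D. \<forall>c. \<omega> p c = (\<Sum>l\<in>UNIV. s1 l p * sigma l p c) + a1 p * Theta \<mu> p c
            + (\<Sum>l\<in>UNIV. \<Sum>m\<in>{1..k}. b1 l m p * xi f D \<mu> l m p c))"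
    using assms(2) unfolding adapted_order_le1_def by blast
  show ?thesis unfolding adapted_order_le1_def
  proof (intro exI[of _ "\<lambda>l p. h p * s1 l p"] exI[of _ "\<lambda>p. h p * a1 p"]
      exI[of _ "\<lambda>l m p. h p * b1 l m p"] conjI allI ballI)
    show "\<And>l. sj D (\<lambda>p. h p * s1 l p)" using h1 assms(1) by (simp add: sj_mult[OF lo])
    show "sj D (\<lambda>p. h p * a1 p)" using h1 assms(1) by (simp add: sj_mult[OF lo])
    show "\<And>l m. sj D (\<lambda>p. h p * b1 l m p)" using h1 assms(1) by (simp add: sj_mult[OF lo])
    fix p c assume p: "p \<in> D"
    show "h p * \<omega> p c = (\<Sum>l\<in>UNIV. (h p * s1 l p) * sigma l p c) + (h p * a1 p) * Theta \<mu> p c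
            + (\<Sum>l\<in>UNIV. \<Sum>m\<in>{1..k}. (h p * b1 l m p) * xi f D \<mu> l m p c)"
    proof -
      have e1: "\<omega> p c = (\<Sum>l\<in>UNIV. s1 l p * sigma l p c) + a1 p * Theta \<mu> p c
            + (\<Sum>l\<in>UNIV. \<Sum>m\<in>{1..k}. b1 l m p * xi f D \<mu> l m p c)" using h1 p by blast
      have d1: "(\<Sum>l\<in>UNIV. (h p * s1 l p) * sigma l p c) = h p * (\<Sum>l\<in>UNIV. s1 l p * sigma l p c)"
        by (simp add: sum_distrib_left mult.assoc)
      have d2: "(\<Sum>l\<in>UNIV. \<Sum>m\<in>{1..k}. (h p * b1 l m p) * xi f D \<mu> l m p c)
         = h p * (\<Sum>l\<in>UNIV. \<Sum>m\<in>{1..k}. b1 l m p * xi f D \<mu> l m p c)"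
        by (simp add: sum_distrib_left mult.assoc)
      have d3: "(h p * a1 p) * Theta \<mu> p c = h p * (a1 p * Theta \<mu> p c)"
        by (simp add: mult.assoc)
      show ?thesis unfolding e1 d1 d2 d3 by (simp add: distrib_left)
    qed
  qed
qed

lemma ao_zero: "ao (\<lambda>p c. 0)"
  unfolding adapted_order_le1_def
  by (intro exI[of _ "\<lambda>l p. 0"] exI[of _ "\<lambda>p. 0"] exI[of _ "\<lambda>l m p. 0"]) (simp add: sj_const)

lemma ao_sum:
  assumes "finite T" "\<forall>w\<in>T. ao (F w)"
  shows "ao (\<lambda>p c. \<Sum>w\<in>T. F w p c)"
  using assms
proof (induction T rule: finite_induct)
  case empty then show ?case by (simp add: ao_zero)
next
  case (insert x T)
  then have "ao (\<lambda>p c. F x p c + (\<lambda>p c. \<Sum>w\<in>T. F w p c) p c)"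
    by (intro ao_add) auto
  then show ?case using insert by simp
qed

lemma ao_Theta: "ao (Theta \<mu>)"
  unfolding adapted_order_le1_def
  by (intro exI[of _ "\<lambda>l p. 0"] exI[of _ "\<lambda>p. 1"] exI[of _ "\<lambda>l m p. 0"]) (simp add: sj_const)

lemma ao_xi:
  assumes "1 \<le> m" "m \<le> k"
  shows "ao (xi f D \<mu> l m)"
  unfolding adapted_order_le1_def
proof (intro exI[of _ "\<lambda>l p. 0"] exI[of _ "\<lambda>p. 0"] exI[of _ "\<lambda>l' m' p. if l' = l \<and> m' = m then 1 else 0"] conjI allI ballI)
  fix p c
  have "\<And>l'. (\<Sum>m'\<in>{1..k}. (if l' = l \<and> m' = m then 1 else 0) * xi f D \<mu> l' m' p c)
        = (if l' = l then xi f D \<mu> l' m p c else 0)"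
  proof -
    fix l'
    show "(\<Sum>m'\<in>{1..k}. (if l' = l \<and> m' = m then 1 else 0) * xi f D \<mu> l' m' p c)
        = (if l' = l then xi f D \<mu> l' m p c else 0)"
    proof (cases "l' = l")
      case True
      have "(\<Sum>m'\<in>{1..k}. (if l' = l \<and> m' = m then 1 else 0) * xi f D \<mu> l' m' p c)
          = (\<Sum>m'\<in>{1..k}. if m' = m then xi f D \<mu> l' m' p c else 0)"
        using True by (intro sum.cong) auto
      then show ?thesis using True assms by (simp add: sum.delta')
    qed simp
  qed
  then show "xi f D \<mu> l m p c = (\<Sum>l\<in>UNIV. 0 * sigma l p c) + 0 * Theta \<mu> p c +
      (\<Sum>l'\<in>UNIV. \<Sum>m'\<in>{1..k}. (if l' = l \<and> m' = m then 1 else 0) * xi f D \<mu> l' m' p c)"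
    by (simp add: sum.delta')
qed (auto simp: sj_const)

end



context
  fixes f :: "3 \<Rightarrow> 3 \<Rightarrow> real^3 \<Rightarrow> real \<Rightarrow> real \<Rightarrow> real \<Rightarrow> real" and D :: "pt set" and \<mu> :: "pt \<Rightarrow> real"
  assumes lo: "lineopen D" and fs: "\<forall>i j. i < j \<longrightarrow> sj D (Fsys f i j)" and smu: "sj D \<mu>"
    and nz: "\<forall>p\<in>D. \<mu> p \<noteq> 0"
begin

lemma sj_inv: "sj D (\<lambda>p. 1 / \<mu> p)"
  by (rule sj_div[OF lo sj_const smu nz])

lemma theta_span: "n \<le> k \<Longrightarrow> \<forall>v\<in>Sj l n. adapted_order_le1 f D \<mu> k (thw v)"
proof (induction n)
  case 0
  have "adapted_order_le1 f D \<mu> k (\<lambda>p c. (1 / \<mu> p) * Theta \<mu> p c)"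
    by (rule ao_smult[OF lo sj_inv ao_Theta[OF lo]])
  moreover have "\<forall>p\<in>D. \<forall>c. (1 / \<mu> p) * Theta \<mu> p c = thw Uc p c"
    using nz by (auto simp: Theta_def thw_def)
  ultimately have "adapted_order_le1 f D \<mu> k (thw Uc)" by (rule ao_cong[OF lo])
  then show ?case by (simp add: Sj_def)
next
  case (Suc n)
  then have IH: "\<forall>v\<in>Sj l n. adapted_order_le1 f D \<mu> k (thw v)" by simp
  obtain g where sg: "\<forall>v. sj D (g v)" and sup: "\<forall>v. v \<notin> Sj l (Suc n) \<longrightarrow> g v = (\<lambda>_. 0)"
    and top: "\<forall>p\<in>D. g (topj l (Suc n)) p = \<mu> p" and rep: "\<forall>p\<in>D. \<forall>c. xi f D \<mu> l (Suc n) p c = vf g p c"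
    using xi_rep[OF lo fs smu, of l "Suc n"] by blast
  have A: "adapted_order_le1 f D \<mu> k (\<lambda>p c. (1 / \<mu> p) * (xi f D \<mu> l (Suc n) p c + (-1) * (\<Sum>v\<in>Sj l n. g v p * thw v p c)))"
  proof (rule ao_smult[OF lo sj_inv], rule ao_add[OF lo])
    show "adapted_order_le1 f D \<mu> k (xi f D \<mu> l (Suc n))" using Suc.prems by (intro ao_xi[OF lo]) auto
    have "adapted_order_le1 f D \<mu> k (\<lambda>p c. \<Sum>v\<in>Sj l n. g v p * thw v p c)"
      by (rule ao_sum[OF lo Sj_fin]) (use IH sg in \<open>auto intro!: ao_smult[OF lo]\<close>)
    then show "adapted_order_le1 f D \<mu> k (\<lambda>p c. (-1) * (\<Sum>v\<in>Sj l n. g v p * thw v p c))"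
      by (rule ao_smult[OF lo sj_const[of D "-1::real"]])
  qed
  have "\<forall>p\<in>D. \<forall>c. (1 / \<mu> p) * (xi f D \<mu> l (Suc n) p c + (-1) * (\<Sum>v\<in>Sj l n. g v p * thw v p c)) = thw (Dc l n) p c"
  proof (intro ballI allI)
    fix p c assume p: "p \<in> D"
    have "xi f D \<mu> l (Suc n) p c = (\<Sum>v\<in>Sj l (Suc n). g v p * thw v p c)"
      using rep p vf_sum[OF Sj_fin sup] by simp
    also have "\<dots> = g (Dc l n) p * thw (Dc l n) p c + (\<Sum>v\<in>Sj l n. g v p * thw v p c)"
      unfolding Sj_Suc by (simp add: Sj_fin Sj_not)
    also have "g (Dc l n) p = \<mu> p" using top p by (simp add: topj_def)
    finally show "(1 / \<mu> p) * (xi f D \<mu> l (Suc n) p c + (-1) * (\<Sum>v\<in>Sj l n. g v p * thw v p c)) = thw (Dc l n) p c"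
      using nz p by (simp add: field_simps)
  qed
  with A have "adapted_order_le1 f D \<mu> k (thw (Dc l n))" by (rule ao_cong[OF lo])
  then show ?case using IH Sj_Suc by auto
qed

end

theorem lemma3p3:
  fixes U :: "(real^3) set" and a b :: real
    and f :: "3 \<Rightarrow> 3 \<Rightarrow> real^3 \<Rightarrow> real \<Rightarrow> real \<Rightarrow> real \<Rightarrow> real"
    and \<mu> :: "pt \<Rightarrow> real"
  assumes "open U" and "connected U" and "a < b"
    and "\<forall>i j. i < j \<longrightarrow> smooth_jet (jdom U a b) (Fsys f i j)"
    and "\<forall>i j k. i \<noteq> j \<and> j \<noteq> k \<and> i \<noteq> k \<longrightarrow>
           (\<forall>p\<in>jdom U a b. Dtot f (jdom U a b) k (Fsys f i j) p = Dtot f (jdom U a b) i (Fsys f k j) p)"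
    and "smooth_jet (jdom U a b) \<mu>" and "\<forall>p\<in>jdom U a b. \<mu> p \<noteq> 0"
  shows "\<forall>k\<ge>1. \<forall>i j. i \<noteq> j \<longrightarrow>
           adapted_order_le1 f (jdom U a b) \<mu> k (Xop f (jdom U a b) i (xi f (jdom U a b) \<mu> j k))"
proof (intro allI impI)
  fix k :: nat and i j :: 3
  assume k: "1 \<le> k" and ij: "i \<noteq> j"
  define D where "D = jdom U a b"
  have lo: "lineopen D" unfolding D_def by (rule jdom_lineopen[OF assms(1)])
  have fs: "\<forall>i j. i < j \<longrightarrow> sj D (Fsys f i j)" using assms(4) by (simp add: D_def)
  have smu: "sj D \<mu>" using assms(6) by (simp add: D_def)
  have nz: "\<forall>p\<in>D. \<mu> p \<noteq> 0" using assms(7) by (simp add: D_def)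
  obtain g where sg: "\<forall>v. sj D (g v)" and sup: "\<forall>v. v \<notin> Sj j k \<longrightarrow> g v = (\<lambda>_. 0)"
    and rep: "\<forall>p\<in>D. \<forall>c. xi f D \<mu> j k p c = vf g p c"
    using xi_rep[OF lo fs smu, of j k] by blast
  define T where "T = insert (Dc i 0) (Sj j k)"
  have finT: "finite T" by (simp add: T_def Sj_fin)
  define h where "h = (\<lambda>w p. Dtot f D i (g w) p + (\<Sum>v\<in>Sj j k. g v p * dV (comp f D i v) p (Vc w)))"
  have sh: "sj D (h w)" for w
  proof -
    have "sj D (\<lambda>p. \<Sum>v\<in>Sj j k. g v p * (\<lambda>p. dV (comp f D i v) p (Vc w)) p)"
      by (rule sj_sum[OF lo Sj_fin]) (auto intro!: sj_mult[OF lo] simp: sg dV_fun sj_partial[OF lo] sj_comp[OF lo fs])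
    then show "sj D (h w)" unfolding h_def
      by (intro sj_add[OF lo] sj_Dtot[OF lo fs]) (auto simp: sg)
  qed
  have hz: "h w p = 0" if w: "w \<notin> T" and p: "p \<in> D" for w p
  proof -
    have g0: "g w = (\<lambda>_. 0)" using sup w by (simp add: T_def)
    have "dV (comp f D i v) p (Vc w) = 0" if v: "v \<in> Sj j k" for v
    proof -
      have "Vc w \<notin> dep D (comp f D i v)"
      proof
        assume wd: "Vc w \<in> dep D (comp f D i v)"
        consider (u) "v = Uc" | (d) n where "v = Dc j n" "n < k" using v by (auto simp: Sj_def)
        then show False
        proof cases
          case u
          then have "Vc w \<in> dep D (\<lambda>p. p (Vc (Dc i 0)))" using wd by (simp add: comp_def)
          then show False using dep_coord[of D "Vc (Dc i 0)"] w by (auto simp: T_def)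
        next
          case d
          then have "Vc w \<in> dep D (Hf f D i j n)" using wd ij by (simp add: comp_eq[OF lo fs])
          then have "Vc w \<in> Sij i j n" using Hf_props[OF lo fs, of i j n] ij by blast
          then show False using w d by (auto simp: Sij_def T_def Sj_def)
        qed
      qed
      then show ?thesis by (simp add: dV_def partial_nodep[OF lo p])
    qed
    then show ?thesis by (simp add: h_def g0 Dtot_zero)
  qed
  have eq: "\<forall>p\<in>D. \<forall>c. (\<Sum>w\<in>T. h w p * thw w p c) = Xop f D i (xi f D \<mu> j k) p c"
  proof (intro ballI allI)
    fix p c assume p: "p \<in> D"
    have "Xop f D i (xi f D \<mu> j k) p c = Xop f D i (vf g) p c" by (rule Xop_cong[OF lo rep p])
    also have "\<dots> = (case c of Xc l \<Rightarrow> 0 | Vc w \<Rightarrow> Dtot f D i (g w) p)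
           + (\<Sum>v\<in>Sj j k. g v p * dV (comp f D i v) p c)"
      by (rule Xop_vf[OF lo Sj_fin sup p])
    also have "\<dots> = (\<Sum>w\<in>T. h w p * thw w p c)"
    proof (cases c)
      case (Xc l) then show ?thesis by (simp add: dV_Xc thw_def)
    next
      case (Vc w)
      have "(\<Sum>w'\<in>T. h w' p * thw w' p c) = (\<Sum>w'\<in>T. if w' = w then h w' p else 0)"
        using Vc by (intro sum.cong) (auto simp: thw_def)
      also have "\<dots> = (if w \<in> T then h w p else 0)" using finT by (simp add: sum.delta')
      also have "\<dots> = h w p" using hz p by auto
      finally show ?thesis using Vc by (simp add: h_def)
    qed
    finally show "(\<Sum>w\<in>T. h w p * thw w p c) = Xop f D i (xi f D \<mu> j k) p c" by simp
  qed
  have "adapted_order_le1 f D \<mu> k (\<lambda>p c. \<Sum>w\<in>T. h w p * thw w p c)"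
  proof (rule ao_sum[OF lo finT], intro ballI)
    fix w assume w: "w \<in> T"
    have "adapted_order_le1 f D \<mu> k (thw w)"
    proof (cases "w = Dc i 0")
      case True
      have "Dc i 0 \<in> Sj i 1" by (simp add: Sj_def)
      then show ?thesis using theta_span[OF lo fs smu nz, where n=1 and k=k and l=i] k True by blast
    next
      case False
      then have "w \<in> Sj j k" using w by (simp add: T_def)
      then show ?thesis using theta_span[OF lo fs smu nz, where n=k and k=k and l=j] by blast
    qed
    then show "adapted_order_le1 f D \<mu> k (\<lambda>p c. h w p * thw w p c)"
      by (rule ao_smult[OF lo sh])
  qed
  then have "adapted_order_le1 f D \<mu> k (Xop f D i (xi f D \<mu> j k))" by (rule ao_cong[OF lo _ eq])
  then show "adapted_order_le1 f (jdom U a b) \<mu> k (Xop f (jdom U a b) i (xi f (jdom U a b) \<mu> j k))"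
    by (simp add: D_def)
qed


end
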